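(* Let $N$ be a finite set with $|N|\ge2$. Under the correspondence between SE faces of $P_N$ and faces of $C_N$ (the SE face $\{\eta\in P_N:\langle o,\eta\rangle=u\}$ with $o$ an SE objective and $\langle o,\eta\rangle\le u$ valid on $P_N$ corresponds to the face $\{c\in C_N:\langle\tau_o,c\rangle=u\}$), the SE facets of $P_N$ correspond exactly to those facets of $C_N$ that contain the 1-imset (the all-ones vector in $\mathbb{R}^{\mathcal{S}}$). None of these facets of $C_N$ contains the 0-imset (the zero vector in $\mathbb{R}^{\mathcal{S}}$).
   Context: $\mathrm{DAG}(N)$ is the set of acyclic directed graphs over $N$; $\mathrm{pa}_G(a)$ is the parent set of $a$ in $G$; $G\sim H$ (Markov equivalence) means same adjacencies and same immoralities. $\Upsilon=\{(a|B): a\in N,\ \emptyset\neq B\subseteq N\setminus\{a\}\}$; $\eta_G\in\mathbb{R}^{\Upsilon}$ has $\eta_G(a|B)=1$ if $B=\mathrm{pa}_G(a)$, else $0$; $P_N=\mathrm{conv}\{\eta_G:G\in\mathrm{DAG}(N)\}$. $\mathcal{S}=\{S\subseteq N:|S|\ge2\}$; $c_\eta(S)=\sum_{a\in S}\sum_{B:\,S\setminus\{a\}\subseteq B\subseteq N\setminus\{a\}}\eta(a|B)$; $c_G=c_{\eta_G}$; $C_N=\mathrm{conv}\{c_G:G\in\mathrm{DAG}(N)\}$. (The 1-imset is $c_H$ for any full graph $H$, the 0-imset is $c_G$ for the empty graph.) $o$ is an SE objective if $\langle o,\eta_G\rangle=\langle o,\eta_H\rangle$ whenever $G\sim H$; an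 SE face/facet of $P_N$ is a face/facet of the form $\{v\in P_N:\langle o,v\rangle=u\}$ with $o$ SE and $\langle o,v\rangle\le u$ valid on $P_N$. For SE $o$, $\tau_o(T)=\sum_{\emptyset\neq K\subseteq T\setminus\{b\}}(-1)^{|T\setminus\{b\}|-|K|}o(b|K)$ for any $b\in T$ (independent of $b$), with $o(b|\emptyset)=0$; then $\langle o,\eta\rangle=\langle\tau_o,c_\eta\rangle$ for all $\eta$. *)

theory Defs
  imports "HOL-Analysis.Analysis"
begin

text \<open>The ground set N is the universe of a finite type 'n.
  A directed graph over N is an edge relation E; (b,a) in E means b -> a.
  Vectors in R^Upsilon are represented in the ambient space real^('n * 'n set),
  with all coordinates outside Upsilon equal to zero; vectors in R^S are
  represented in real^('n set) with coordinates of sets of size < 2 equal to zero.\<close>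

definition is_dag :: "('n \<times> 'n) set \<Rightarrow> bool" where
  "is_dag E \<longleftrightarrow> acyclic E"

definition pa :: "('n \<times> 'n) set \<Rightarrow> 'n \<Rightarrow> 'n set" where
  "pa E a = {b. (b, a) \<in> E}"

definition adj :: "('n \<times> 'n) set \<Rightarrow> 'n \<Rightarrow> 'n \<Rightarrow> bool" where
  "adj E a b \<longleftrightarrow> (a, b) \<in> E \<or> (b, a) \<in> E"

definition immoralities :: "('n \<times> 'n) set \<Rightarrow> ('n \<times> 'n \<times> 'n) set" where
  "immoralities E = {(a, c, b). (a, c) \<in> E \<and> (b, c) \<in> E \<and> a \<noteq> b \<and> \<not> adj E a b}"

definition markov_equiv :: "('n \<times> 'n) set \<Rightarrow> ('n \<times> 'n) set \<Rightarrow> bool" where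
  "markov_equiv G H \<longleftrightarrow> (\<forall>a b. adj G a b \<longleftrightarrow> adj H a b) \<and> immoralities G = immoralities H"

definition in_Upsilon :: "'n \<times> 'n set \<Rightarrow> bool" where
  "in_Upsilon p \<longleftrightarrow> snd p \<noteq> {} \<and> fst p \<notin> snd p"

definition eta :: "('n::finite \<times> 'n) set \<Rightarrow> real ^ ('n \<times> 'n set)" where
  "eta E = (\<chi> p. if in_Upsilon p \<and> snd p = pa E (fst p) then 1 else 0)"

definition P_N :: "(real ^ ('n::finite \<times> 'n set)) set" where
  "P_N = convex hull (eta ` {E. is_dag E})"

definition cvec :: "real ^ ('n::finite \<times> 'n set) \<Rightarrow> real ^ ('n set)" where
  "cvec v = (\<chi> S. if 2 \<le> card S then
      (\<Sum>a\<in>S. \<Sum>B\<in>{B. S - {a} \<subseteq> B \<and> a \<notin> B}. v $ (a, B)) else 0)"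

definition C_N :: "(real ^ ('n::finite set)) set" where
  "C_N = convex hull ((\<lambda>E. cvec (eta E)) ` {E :: ('n \<times> 'n) set. is_dag E})"

definition se_objective :: "real ^ ('n::finite \<times> 'n set) \<Rightarrow> bool" where
  "se_objective ob \<longleftrightarrow> (\<forall>p. \<not> in_Upsilon p \<longrightarrow> ob $ p = 0) \<and>
     (\<forall>G H. is_dag G \<and> is_dag H \<and> markov_equiv G H \<longrightarrow> ob \<bullet> eta G = ob \<bullet> eta H)"

text \<open>tau_o(T), computed with the choice b = (SOME b. b in T) (independent of b for SE o).\<close>
definition tau :: "real ^ ('n::finite \<times> 'n set) \<Rightarrow> real ^ ('n set)" where
  "tau ob = (\<chi> T. if 2 \<le> card T then
      (let b = (SOME b. b \<in> T) in
        \<Sum>K\<in>{K. K \<noteq> {} \<and> K \<subseteq> T - {b}}. (-1) ^ (card (T - {b}) - card K) * ob $ (b, K))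
      else 0)"

definition one_imset :: "real ^ ('n::finite set)" where
  "one_imset = (\<chi> S. if 2 \<le> card S then 1 else 0)"

end

theory Submission
  imports Defs
begin


definition Ev :: "'n::finite \<Rightarrow> 'n set \<Rightarrow> real ^ ('n \<times> 'n set)" where
  "Ev a B = (if B \<noteq> {} \<and> a \<notin> B then axis (a, B) 1 else 0)"

lemma eta_sum: "eta E = (\<Sum>a\<in>UNIV. Ev a (pa E a))"
proof -
  have "(\<Sum>a\<in>UNIV. Ev a (pa E a)) $ p = eta E $ p" for p
  proof -
    obtain a B where p: "p = (a,B)" by (cases p)
    have "(\<Sum>x\<in>UNIV. Ev x (pa E x)) $ p = (\<Sum>x\<in>UNIV. Ev x (pa E x) $ p)"
      by (simp add: sum_component)
    also have "\<dots> = (\<Sum>x\<in>UNIV. if x = a then Ev a (pa E a) $ p else 0)"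
      by (rule sum.cong) (auto simp: Ev_def p axis_def)
    also have "\<dots> = Ev a (pa E a) $ p" by simp
    also have "\<dots> = eta E $ p"
      by (auto simp: Ev_def eta_def p axis_def in_Upsilon_def)
    finally show ?thesis .
  qed
  then show ?thesis by (simp add: vec_eq_iff)
qed

definition zo :: "real ^ ('n::finite \<times> 'n set) \<Rightarrow> bool" where
  "zo ob \<longleftrightarrow> (\<forall>p. \<not> in_Upsilon p \<longrightarrow> ob $ p = 0)"

lemma se_zo: "se_objective ob \<Longrightarrow> zo ob"
  by (simp add: se_objective_def zo_def)

lemma inner_Ev: "zo ob \<Longrightarrow> ob \<bullet> Ev a B = ob $ (a, B)"
  by (auto simp: Ev_def zo_def in_Upsilon_def inner_axis)

lemma inner_eta: "zo ob \<Longrightarrow> ob \<bullet> eta E = (\<Sum>a\<in>UNIV. ob $ (a, pa E a))"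
  by (simp add: eta_sum inner_sum_right inner_Ev)

definition cE :: "'n set \<Rightarrow> ('n \<Rightarrow> nat) \<Rightarrow> ('n \<times> 'n) set" where
  "cE R r = {(x, y). x \<in> R \<and> y \<in> R \<and> r x < r y}"

lemma pa_cE: "pa (cE R r) y = (if y \<in> R then {x\<in>R. r x < r y} else {})"
  by (auto simp: pa_def cE_def)

lemma acyclic_rank:
  assumes "\<And>x y. (x, y) \<in> E \<Longrightarrow> (t x :: nat) < t y"
  shows "acyclic E"
proof -
  have "E \<subseteq> {(x, y). t x < t y}" using assms by auto
  moreover have "acyclic {(x, y). t x < t y}"
  proof -
    have tr: "trans {(x, y). t x < t y}" by (auto simp: trans_def)
    have "{(x, y). t x < t y}\<^sup>+ = {(x, y). t x < t y}" using tr by (rule trancl_id)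
    then show ?thesis by (auto simp: acyclic_def)
  qed
  ultimately show ?thesis by (rule acyclic_subset[rotated])
qed

lemma dag_cE: "is_dag (cE R r)"
  unfolding is_dag_def by (rule acyclic_rank[of _ r]) (auto simp: cE_def)

lemma markov_cE:
  assumes "inj_on r1 R" "inj_on r2 R"
  shows "markov_equiv (cE R r1) (cE R r2)"
proof -
  have adj: "adj (cE R r) x y \<longleftrightarrow> x \<in> R \<and> y \<in> R \<and> x \<noteq> y" if "inj_on r R" for r x y
    using that by (auto simp: adj_def cE_def inj_on_def) (metis linorder_neqE_nat)
  have im: "immoralities (cE R r) = {}" if "inj_on r R" for r
    using adj[OF that] by (auto simp: immoralities_def cE_def)
  show ?thesis using adj[OF assms(1)] adj[OF assms(2)] im[OF assms(1)] im[OF assms(2)]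
    by (simp add: markov_equiv_def)
qed

lemma se_cE:
  assumes "se_objective ob" "inj_on r1 R" "inj_on r2 R"
  shows "(\<Sum>a\<in>UNIV. ob $ (a, pa (cE R r1) a)) = (\<Sum>a\<in>UNIV. ob $ (a, pa (cE R r2) a))"
proof -
  have "ob \<bullet> eta (cE R r1) = ob \<bullet> eta (cE R r2)"
    using assms dag_cE markov_cE unfolding se_objective_def by blast
  then show ?thesis using inner_eta[OF se_zo[OF assms(1)]] by simp
qed



definition MM :: "'n::finite itself \<Rightarrow> nat" where
  "MM _ = Suc (Max (range (to_nat :: 'n \<Rightarrow> nat)))"

lemma to_nat_lt_MM: "to_nat (x::'n::finite) < MM TYPE('n)"
  unfolding MM_def by (simp add: le_imp_less_Suc)

lemma sum_two_split:
  fixes f :: "'n::finite \<Rightarrow> real"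
  assumes "b \<noteq> b'"
  shows "(\<Sum>a\<in>UNIV. f a) = f b + f b' + (\<Sum>a\<in>UNIV - {b, b'}. f a)"
proof -
  have "(\<Sum>a\<in>UNIV. f a) = (\<Sum>a\<in>{b,b'}. f a) + (\<Sum>a\<in>UNIV - {b, b'}. f a)"
    by (metis add.commute finite sum.subset_diff top_greatest)
  then show ?thesis using assms by simp
qed

lemma swap_identity:
  fixes ob :: "real ^ ('n::finite \<times> 'n set)"
  assumes se: "se_objective ob" and bb: "b \<noteq> b'" "b \<notin> K" "b' \<notin> K"
  shows "ob $ (b', K) + ob $ (b, insert b' K) = ob $ (b, K) + ob $ (b', insert b K)"
proof -
  define M where "M = MM TYPE('n)"
  define R where "R = insert b (insert b' K)"
  define r1 where "r1 x = (if x = b' then M else if x = b then Suc M else to_nat x)" for x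
  define r2 where "r2 x = (if x = b then M else if x = b' then Suc M else to_nat x)" for x
  have lt: "to_nat x < M" for x :: 'n unfolding M_def by (rule to_nat_lt_MM)
  have ne: "to_nat x \<noteq> M" "to_nat x \<noteq> Suc M" "M \<noteq> to_nat x" "Suc M \<noteq> to_nat x" for x :: 'n
    using lt[of x] by auto
  have i1: "inj_on r1 R" unfolding inj_on_def r1_def
    using ne inj_to_nat[where ?'a='n] by (simp add: inj_def)
  have i2: "inj_on r2 R" unfolding inj_on_def r2_def
    using ne inj_to_nat[where ?'a='n] by (simp add: inj_def)
  have e: "(\<Sum>a\<in>UNIV. ob $ (a, pa (cE R r1) a)) = (\<Sum>a\<in>UNIV. ob $ (a, pa (cE R r2) a))"
    by (rule se_cE[OF se i1 i2])
  have p1b': "pa (cE R r1) b' = K" using lt bb unfolding pa_cE R_def r1_def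
    by (auto simp: less_Suc_eq)
  have p1b: "pa (cE R r1) b = insert b' K" using lt bb unfolding pa_cE R_def r1_def
    by (auto simp: less_Suc_eq)
  have p2b: "pa (cE R r2) b = K" using lt bb unfolding pa_cE R_def r2_def
    by (auto simp: less_Suc_eq)
  have p2b': "pa (cE R r2) b' = insert b K" using lt bb unfolding pa_cE R_def r2_def
    by (auto simp: less_Suc_eq)
  have po: "pa (cE R r1) x = pa (cE R r2) x" if "x \<in> UNIV - {b, b'}" for x
  proof (cases "x \<in> R")
    case True
    then have "x \<in> K" using that R_def by auto
    have "r1 y < r1 x \<longleftrightarrow> r2 y < r2 x" for y
      using \<open>x \<in> K\<close> that lt[of x] unfolding r1_def r2_def by auto
    then show ?thesis using True by (simp add: pa_cE)
  next
    case False then show ?thesis by (simp add: pa_cE)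
  qed
  have "(\<Sum>a\<in>UNIV - {b, b'}. ob $ (a, pa (cE R r1) a)) = (\<Sum>a\<in>UNIV - {b, b'}. ob $ (a, pa (cE R r2) a))"
    using po by (intro sum.cong) auto
  then show ?thesis using e sum_two_split[OF bb(1)] p1b p1b' p2b p2b'
    by (smt (verit))
qed

lemma alt_expand:
  fixes f :: "'a set \<Rightarrow> real"
  assumes "finite R" "x \<notin> R"
  shows "(\<Sum>K\<in>Pow (insert x R). (-1) ^ (card (insert x R) - card K) * f K)
       = (\<Sum>K\<in>Pow R. (-1) ^ (card R - card K) * (f (insert x K) - f K))"
proof -
  have fin: "finite K" if "K \<in> Pow R" for K using assms(1) that finite_subset by auto
  have cK: "card K \<le> card R" if "K \<in> Pow R" for K using assms(1) that card_mono by auto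
  have inj: "inj_on (insert x) (Pow R)"
    using assms(2) by (auto simp: inj_on_def)
  have disj: "Pow R \<inter> insert x ` Pow R = {}" using assms(2) by auto
  have "(\<Sum>K\<in>Pow (insert x R). (-1) ^ (card (insert x R) - card K) * f K)
     = (\<Sum>K\<in>Pow R. (-1) ^ (card (insert x R) - card K) * f K)
       + (\<Sum>K\<in>insert x ` Pow R. (-1) ^ (card (insert x R) - card K) * f K)"
    unfolding Pow_insert using assms(1) disj by (intro sum.union_disjoint) auto
  also have "(\<Sum>K\<in>insert x ` Pow R. (-1) ^ (card (insert x R) - card K) * f K)
     = (\<Sum>K\<in>Pow R. (-1) ^ (card (insert x R) - card (insert x K)) * f (insert x K))"
    by (rule sum.reindex[OF inj, unfolded comp_def])
  also have "\<dots> = (\<Sum>K\<in>Pow R. (-1) ^ (card R - card K) * f (insert x K))"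
  proof (rule sum.cong[OF refl])
    fix K assume K: "K \<in> Pow R"
    then have "x \<notin> K" using assms(2) by auto
    then show "(-1) ^ (card (insert x R) - card (insert x K)) * f (insert x K) = (-1) ^ (card R - card K) * f (insert x K)"
      using assms fin[OF K] by simp
  qed
  also have "(\<Sum>K\<in>Pow R. (-1) ^ (card (insert x R) - card K) * f K) = (\<Sum>K\<in>Pow R. - ((-1) ^ (card R - card K) * f K))"
  proof (rule sum.cong[OF refl])
    fix K assume K: "K \<in> Pow R"
    have "card (insert x R) - card K = Suc (card R - card K)" using assms cK[OF K] by simp
    then show "(-1) ^ (card (insert x R) - card K) * f K = - ((-1) ^ (card R - card K) * f K)" by simp
  qed
  finally show ?thesis by (simp add: sum_subtractf[symmetric] sum_negf algebra_simps)
qed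

definition Aob :: "real ^ ('n::finite \<times> 'n set) \<Rightarrow> 'n \<Rightarrow> 'n set \<Rightarrow> real" where
  "Aob ob b T = (\<Sum>K\<in>Pow (T - {b}). (-1) ^ (card (T - {b}) - card K) * ob $ (b, K))"

lemma Aob_indep:
  assumes se: "se_objective ob" and "b \<in> T" "b' \<in> T"
  shows "Aob ob b T = Aob ob b' T"
proof (cases "b = b'")
  case True then show ?thesis by simp
next
  case False
  define R where "R = T - {b, b'}"
  have 1: "T - {b} = insert b' R" "T - {b'} = insert b R" using assms False R_def by auto
  have fR: "finite R" by simp
  have "Aob ob b T = (\<Sum>K\<in>Pow R. (-1) ^ (card R - card K) * (ob $ (b, insert b' K) - ob $ (b, K)))"
    unfolding Aob_def 1 by (rule alt_expand[OF fR]) (simp add: R_def)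
  also have "\<dots> = (\<Sum>K\<in>Pow R. (-1) ^ (card R - card K) * (ob $ (b', insert b K) - ob $ (b', K)))"
  proof (rule sum.cong[OF refl])
    fix K assume "K \<in> Pow R"
    then have "b \<notin> K" "b' \<notin> K" by (auto simp: R_def)
    from swap_identity[OF se False this] show "(-1) ^ (card R - card K) * (ob $ (b, insert b' K) - ob $ (b, K)) = (-1) ^ (card R - card K) * (ob $ (b', insert b K) - ob $ (b', K))"
      by simp
  qed
  also have "\<dots> = Aob ob b' T"
    unfolding Aob_def 1 by (rule alt_expand[OF fR, symmetric]) (simp add: R_def)
  finally show ?thesis .
qed

lemma tau_Aob:
  assumes se: "se_objective ob" and "2 \<le> card T" "b \<in> T"
  shows "tau ob $ T = Aob ob b T"
proof -
  define b0 where "b0 = (SOME b. b \<in> T)"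
  have b0: "b0 \<in> T" unfolding b0_def using assms(3) by (rule someI)
  have z: "ob $ (b0, {}) = 0" using se_zo[OF se] by (simp add: zo_def in_Upsilon_def)
  have "Pow (T - {b0}) = insert {} {K. K \<noteq> {} \<and> K \<subseteq> T - {b0}}" by auto
  then have "Aob ob b0 T = (\<Sum>K\<in>{K. K \<noteq> {} \<and> K \<subseteq> T - {b0}}. (-1) ^ (card (T - {b0}) - card K) * ob $ (b0, K))"
    unfolding Aob_def using z by (simp only:) (subst sum.insert, auto)
  then have "tau ob $ T = Aob ob b0 T"
    using assms(2) by (simp add: tau_def b0_def Let_def)
  also have "\<dots> = Aob ob b T" by (rule Aob_indep[OF se b0 assms(3)])
  finally show ?thesis .
qed

lemma alt_Pow:
  assumes "finite A"
  shows "(\<Sum>X\<in>Pow A. (-1) ^ (card A - card X) :: real) = (if A = {} then 1 else 0)"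
proof (cases "A = {}")
  case True then show ?thesis by simp
next
  case False
  then obtain x R where A: "A = insert x R" "x \<notin> R" by (meson Set.set_insert ex_in_conv)
  have "(\<Sum>X\<in>Pow A. (-1) ^ (card A - card X) :: real) = (\<Sum>X\<in>Pow A. (-1) ^ (card A - card X) * (\<lambda>_. 1::real) X)"
    by simp
  also have "\<dots> = 0" unfolding A(1) by (subst alt_expand) (use assms A in auto)
  finally show ?thesis using False by simp
qed

lemma alt_interval:
  assumes "finite B" "K \<subseteq> B"
  shows "(\<Sum>J\<in>{J. K \<subseteq> J \<and> J \<subseteq> B}. (-1) ^ (card J - card K) :: real) = (if K = B then 1 else 0)"
proof -
  have "(\<Sum>J\<in>{J. K \<subseteq> J \<and> J \<subseteq> B}. (-1) ^ (card J - card K) :: real)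
      = (\<Sum>X\<in>Pow (B - K). (-1) ^ (card (B - K) - card X))"
  proof (rule sum.reindex_bij_witness[of _ "\<lambda>X. B - X" "\<lambda>J. B - J"])
    fix J assume J: "J \<in> {J. K \<subseteq> J \<and> J \<subseteq> B}"
    have "card (B - J) = card B - card J" using J assms by (subst card_Diff_subset) (auto intro: finite_subset)
    moreover have "card (B - K) = card B - card K" using assms by (simp add: card_Diff_subset finite_subset)
    moreover have "card K \<le> card J" "card J \<le> card B" using J assms by (auto intro: card_mono finite_subset)
    ultimately have "card (B - K) - card (B - J) = card J - card K" by linarith
    then show "(-1) ^ (card (B - K) - card (B - J)) = ((-1) ^ (card J - card K) :: real)"
      by simp
  qed (use assms in auto)
  also have "\<dots> = (if K = B then 1 else 0)" using alt_Pow[of "B - K"] assms by auto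
  finally show ?thesis .
qed

lemma key_mobius:
  assumes se: "se_objective ob" and a: "a \<notin> B" "B \<noteq> {}"
  shows "(\<Sum>S\<in>{S. 2 \<le> card S \<and> a \<in> S \<and> S - {a} \<subseteq> B}. tau ob $ S) = ob $ (a, B)"
proof -
  define f where "f K = ob $ (a, K)" for K
  have f0: "f {} = 0" using se_zo[OF se] by (simp add: zo_def in_Upsilon_def f_def)
  have fB: "finite B" by simp
  have set: "{S. 2 \<le> card S \<and> a \<in> S \<and> S - {a} \<subseteq> B} = insert a ` {J. J \<subseteq> B \<and> J \<noteq> {}}"
  proof
    show "{S. 2 \<le> card S \<and> a \<in> S \<and> S - {a} \<subseteq> B} \<subseteq> insert a ` {J. J \<subseteq> B \<and> J \<noteq> {}}"
    proof
      fix S assume S: "S \<in> {S. 2 \<le> card S \<and> a \<in> S \<and> S - {a} \<subseteq> B}"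
      have "S - {a} \<noteq> {}"
      proof
        assume "S - {a} = {}"
        then have "S \<subseteq> {a}" by auto
        then have "card S \<le> 1" using card_mono[of "{a}" S] by auto
        then show False using S by auto
      qed
      then show "S \<in> insert a ` {J. J \<subseteq> B \<and> J \<noteq> {}}" using S by (intro image_eqI[of _ _ "S - {a}"]) auto
    qed
  next
    show "insert a ` {J. J \<subseteq> B \<and> J \<noteq> {}} \<subseteq> {S. 2 \<le> card S \<and> a \<in> S \<and> S - {a} \<subseteq> B}"
    proof
      fix S assume "S \<in> insert a ` {J. J \<subseteq> B \<and> J \<noteq> {}}"
      then obtain J where J: "S = insert a J" "J \<subseteq> B" "J \<noteq> {}" by auto
      have "a \<notin> J" using J a by auto
      moreover have "card J \<ge> 1" using J fB by (meson card_0_eq finite_subset less_one not_le)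
      ultimately have "card S \<ge> 2" using J fB by (simp add: finite_subset)
      then show "S \<in> {S. 2 \<le> card S \<and> a \<in> S \<and> S - {a} \<subseteq> B}" using J by auto
    qed
  qed
  have inj: "inj_on (insert a) {J. J \<subseteq> B \<and> J \<noteq> {}}"
    unfolding inj_on_def using a by (metis Diff_insert_absorb mem_Collect_eq subsetD)
  have tauJ: "tau ob $ insert a J = (\<Sum>K\<in>Pow J. (-1) ^ (card J - card K) * f K)"
    if "J \<subseteq> B" "J \<noteq> {}" for J
  proof -
    have "a \<notin> J" using that a by auto
    have cJ: "card J \<noteq> 0" using that fB by (simp add: finite_subset)
    have fJ: "finite J" using that fB finite_subset by auto
    have "card (insert a J) = Suc (card J)" using \<open>a \<notin> J\<close> fJ by simp
    then have "2 \<le> card (insert a J)" using cJ by linarith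
    from tau_Aob[OF se this] have "tau ob $ insert a J = Aob ob a (insert a J)" by simp
    also have "insert a J - {a} = J" using \<open>a \<notin> J\<close> by auto
    ultimately show ?thesis by (simp add: Aob_def f_def)
  qed
  have "(\<Sum>S\<in>{S. 2 \<le> card S \<and> a \<in> S \<and> S - {a} \<subseteq> B}. tau ob $ S)
      = (\<Sum>J\<in>{J. J \<subseteq> B \<and> J \<noteq> {}}. tau ob $ insert a J)"
    unfolding set by (rule sum.reindex[OF inj, unfolded comp_def])
  also have "\<dots> = (\<Sum>J\<in>{J. J \<subseteq> B \<and> J \<noteq> {}}. \<Sum>K\<in>Pow J. (-1) ^ (card J - card K) * f K)"
    by (rule sum.cong) (auto simp: tauJ)
  also have "\<dots> = (\<Sum>J\<in>Pow B. \<Sum>K\<in>Pow J. (-1) ^ (card J - card K) * f K)"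
  proof -
    have "Pow B = insert {} {J. J \<subseteq> B \<and> J \<noteq> {}}" by auto
    then show ?thesis using f0 by (simp only:) (subst sum.insert, auto)
  qed
  also have "\<dots> = (\<Sum>J\<in>Pow B. \<Sum>K\<in>{K. K \<in> Pow B \<and> K \<subseteq> J}. (-1) ^ (card J - card K) * f K)"
    by (rule sum.cong[OF refl]) (rule sum.cong, auto)
  also have "\<dots> = (\<Sum>K\<in>Pow B. \<Sum>J\<in>{J. J \<in> Pow B \<and> K \<subseteq> J}. (-1) ^ (card J - card K) * f K)"
    by (rule sum.swap_restrict) auto
  also have "\<dots> = (\<Sum>K\<in>Pow B. f K * (\<Sum>J\<in>{J. K \<subseteq> J \<and> J \<subseteq> B}. (-1) ^ (card J - card K)))"
    by (rule sum.cong[OF refl]) (auto simp: sum_distrib_left mult.commute intro!: sum.cong)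
  also have "\<dots> = (\<Sum>K\<in>Pow B. if K = B then f K else 0)"
    by (rule sum.cong[OF refl]) (simp add: alt_interval)
  also have "\<dots> = f B" by simp
  finally show ?thesis by (simp add: f_def)
qed



lemma linear_cvec: "linear cvec"
proof (rule linearI)
  fix x y :: "real ^ ('n::finite \<times> 'n set)"
  show "cvec (x + y) = cvec x + cvec y"
    by (simp add: cvec_def vec_eq_iff sum.distrib)
  fix c :: real
  show "cvec (c *\<^sub>R x) = c *\<^sub>R cvec x"
    by (simp add: cvec_def vec_eq_iff sum_distrib_left)
qed

lemma cvec_axis:
  "cvec (axis (a, B) 1 :: real ^ ('n::finite \<times> 'n set)) $ S =
     (if 2 \<le> card S \<and> a \<in> S \<and> S - {a} \<subseteq> B \<and> a \<notin> B then 1 else 0)"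
proof -
  have inner: "(\<Sum>B'\<in>{B'. S - {x} \<subseteq> B' \<and> x \<notin> B'}. (axis (a, B) 1 :: real ^ ('n \<times> 'n set)) $ (x, B'))
     = (if x = a \<and> S - {a} \<subseteq> B \<and> a \<notin> B then 1 else 0)" for x
  proof -
    have "(\<Sum>B'\<in>{B'. S - {x} \<subseteq> B' \<and> x \<notin> B'}. (axis (a, B) 1 :: real ^ ('n \<times> 'n set)) $ (x, B'))
       = (\<Sum>B'\<in>{B'. S - {x} \<subseteq> B' \<and> x \<notin> B'}. if x = a then (if B' = B then 1 else 0) else 0)"
      by (rule sum.cong) (auto simp: axis_def)
    also have "\<dots> = (if x = a \<and> S - {a} \<subseteq> B \<and> a \<notin> B then 1 else 0)"
      by (cases "x = a") (auto simp: sum.delta')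
    finally show ?thesis .
  qed
  have "(\<Sum>x\<in>S. (if x = a \<and> S - {a} \<subseteq> B \<and> a \<notin> B then 1 else 0 :: real))
     = (if a \<in> S \<and> S - {a} \<subseteq> B \<and> a \<notin> B then 1 else 0)"
  proof (cases "S - {a} \<subseteq> B \<and> a \<notin> B")
    case True
    then show ?thesis by (simp add: sum.delta)
  next
    case False
    show ?thesis by (subst sum.neutral) (use False in auto)
  qed
  then show ?thesis by (simp add: cvec_def inner)
qed

lemma inner_cvec_axis:
  "t \<bullet> cvec (axis (a, B) 1 :: real ^ ('n::finite \<times> 'n set)) =
     (if a \<notin> B then (\<Sum>S\<in>{S. 2 \<le> card S \<and> a \<in> S \<and> S - {a} \<subseteq> B}. t $ S) else 0)"
proof -
  have "t \<bullet> cvec (axis (a, B) 1 :: real ^ ('n::finite \<times> 'n set))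
     = (\<Sum>S\<in>UNIV. if 2 \<le> card S \<and> a \<in> S \<and> S - {a} \<subseteq> B \<and> a \<notin> B then t $ S else 0)"
    by (simp add: inner_vec_def cvec_axis if_distrib cong: if_cong)
  also have "\<dots> = (\<Sum>S\<in>{S. 2 \<le> card S \<and> a \<in> S \<and> S - {a} \<subseteq> B \<and> a \<notin> B}. t $ S)"
    by (simp add: sum.If_cases)
  also have "\<dots> = (if a \<notin> B then (\<Sum>S\<in>{S. 2 \<le> card S \<and> a \<in> S \<and> S - {a} \<subseteq> B}. t $ S) else 0)"
    by auto
  finally show ?thesis .
qed

lemma transfer_inner:
  assumes "\<And>p. ob $ p = t \<bullet> cvec (axis p 1 :: real ^ ('n::finite \<times> 'n set))"
  shows "ob \<bullet> v = t \<bullet> cvec v"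
proof -
  have v: "v = (\<Sum>p\<in>UNIV. v $ p *\<^sub>R axis p 1)"
    using basis_expansion[of v] by (simp add: scalar_mult_eq_scaleR)
  have "t \<bullet> cvec v = t \<bullet> (\<Sum>p\<in>UNIV. v $ p *\<^sub>R cvec (axis p 1))"
    by (subst v) (simp add: linear_sum[OF linear_cvec] linear_scale[OF linear_cvec])
  also have "\<dots> = (\<Sum>p\<in>UNIV. v $ p * ob $ p)"
    by (simp add: inner_sum_right assms)
  also have "\<dots> = ob \<bullet> v" by (simp add: inner_vec_def mult.commute)
  finally show ?thesis by simp
qed

lemma tau_cvec:
  assumes se: "se_objective ob"
  shows "tau ob \<bullet> cvec v = ob \<bullet> v"
proof -
  have "ob $ p = tau ob \<bullet> cvec (axis p 1)" for p
  proof -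
    obtain a B where p: "p = (a, B)" by (cases p)
    show ?thesis
    proof (cases "a \<in> B")
      case True
      then show ?thesis using se_zo[OF se] by (simp add: p inner_cvec_axis zo_def in_Upsilon_def)
    next
      case False
      show ?thesis
      proof (cases "B = {}")
        case True
        have E: "{S. 2 \<le> card S \<and> a \<in> S \<and> S - {a} \<subseteq> B} = {}"
        proof (safe)
          fix S assume "2 \<le> card S" "a \<in> S" "S - {a} \<subseteq> B"
          then have "S \<subseteq> {a}" using True by auto
          then have "card S \<le> 1" using card_mono[of "{a}" S] by auto
          then show "S \<in> {}" using \<open>2 \<le> card S\<close> by auto
        qed
        show ?thesis using se_zo[OF se] True \<open>a \<notin> B\<close> unfolding p inner_cvec_axis E
          by (simp add: zo_def in_Upsilon_def)
      next
        case False
        then show ?thesis using key_mobius[OF se \<open>a \<notin> B\<close> False] \<open>a \<notin> B\<close> by (simp add: p inner_cvec_axis)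
      qed
    qed
  qed
  then show ?thesis by (rule transfer_inner[symmetric])
qed



lemma C_N_image: "C_N = cvec ` P_N"
  unfolding C_N_def P_N_def convex_hull_linear_image[OF linear_cvec] image_image ..

lemma FC_image:
  assumes "se_objective ob"
  shows "{c \<in> C_N. tau ob \<bullet> c = u} = cvec ` {v \<in> P_N. ob \<bullet> v = u}"
  unfolding C_N_image using tau_cvec[OF assms] by auto

lemma valid_transfer:
  assumes "se_objective ob" "\<forall>v\<in>P_N. ob \<bullet> v \<le> u"
  shows "\<forall>c\<in>C_N. tau ob \<bullet> c \<le> u"
  unfolding C_N_image using tau_cvec[OF assms(1)] assms(2) by auto

lemma dag_sink:
  fixes E :: "('n::finite \<times> 'n) set"
  assumes "is_dag E" "A \<noteq> {}"
  shows "\<exists>x\<in>A. \<forall>y\<in>A. (x, y) \<notin> E"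
proof -
  have "wf (E\<inverse>)" using assms(1) unfolding is_dag_def
    by (intro finite_acyclic_wf_converse) (auto intro: finite_subset[OF subset_UNIV])
  moreover obtain x0 where "x0 \<in> A" using assms(2) by auto
  ultimately obtain z where "z \<in> A" "\<forall>y. (y, z) \<in> E\<inverse> \<longrightarrow> y \<notin> A"
    unfolding wf_eq_minimal by blast
  then show ?thesis by auto
qed

lemma dag_no_loop: "is_dag E \<Longrightarrow> (a, a) \<notin> E"
  unfolding is_dag_def acyclic_def by auto

lemma dag_no_2cycle: "is_dag E \<Longrightarrow> (a, b) \<in> E \<Longrightarrow> (b, a) \<notin> E"
  unfolding is_dag_def acyclic_def by (meson trancl.simps)

lemma dag_no_3cycle: "is_dag E \<Longrightarrow> (a, b) \<in> E \<Longrightarrow> (b, c) \<in> E \<Longrightarrow> (c, a) \<notin> E"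
  unfolding is_dag_def acyclic_def by (meson trancl.simps)

lemma cvec_Ev: "cvec (Ev a B) $ S = (if 2 \<le> card S \<and> a \<in> S \<and> S - {a} \<subseteq> B \<and> B \<noteq> {} \<and> a \<notin> B then 1 else 0)"
  by (simp add: Ev_def cvec_axis linear_0[OF linear_cvec])

lemma cvec_eta:
  assumes "is_dag E"
  shows "cvec (eta E) $ S = (if 2 \<le> card S \<and> (\<exists>a\<in>S. S - {a} \<subseteq> pa E a) then 1 else 0)"
proof -
  define P where "P a \<longleftrightarrow> 2 \<le> card S \<and> a \<in> S \<and> S - {a} \<subseteq> pa E a \<and> pa E a \<noteq> {} \<and> a \<notin> pa E a" for a
  have "cvec (eta E) $ S = (\<Sum>a\<in>UNIV. cvec (Ev a (pa E a)) $ S)"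
    by (simp add: eta_sum linear_sum[OF linear_cvec] sum_component)
  also have "\<dots> = (\<Sum>a\<in>UNIV. if P a then 1 else 0)"
    by (simp add: cvec_Ev P_def)
  also have "\<dots> = (if 2 \<le> card S \<and> (\<exists>a\<in>S. S - {a} \<subseteq> pa E a) then 1 else 0)"
  proof (cases "\<exists>a. P a")
    case True
    then obtain a where a: "P a" by auto
    have uniq: "x = a" if "P x" for x
    proof (rule ccontr)
      assume "x \<noteq> a"
      then have "(x, a) \<in> E" "(a, x) \<in> E" using a that by (auto simp: P_def pa_def)
      then show False using dag_no_2cycle[OF assms] by blast
    qed
    have "(\<Sum>a\<in>UNIV. if P a then 1 else 0) = (\<Sum>x\<in>UNIV. if x = a then 1 else (0::real))"
      by (rule sum.cong) (auto simp: uniq a)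
    then show ?thesis using a by (auto simp: P_def)
  next
    case False
    have "\<not> (2 \<le> card S \<and> (\<exists>a\<in>S. S - {a} \<subseteq> pa E a))"
    proof
      assume "2 \<le> card S \<and> (\<exists>a\<in>S. S - {a} \<subseteq> pa E a)"
      then obtain a where a: "2 \<le> card S" "a \<in> S" "S - {a} \<subseteq> pa E a" by auto
      have "S - {a} \<noteq> {}"
      proof
        assume "S - {a} = {}"
        then have "S \<subseteq> {a}" by auto
        then have "card S \<le> 1" using card_mono[of "{a}" S] by auto
        then show False using a by auto
      qed
      then have "pa E a \<noteq> {}" using a by auto
      moreover have "a \<notin> pa E a" using dag_no_loop[OF assms] by (auto simp: pa_def)
      ultimately have "P a" using a by (auto simp: P_def)
      then show False using False by auto
    qed
    then show ?thesis using False by auto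
  qed
  finally show ?thesis .
qed

lemma cvec_complete:
  assumes "inj r"
  shows "cvec (eta (cE UNIV r)) = one_imset"
proof -
  have "\<exists>a\<in>S. S - {a} \<subseteq> pa (cE UNIV r) a" if "2 \<le> card S" for S :: "'a set"
  proof -
    have "S \<noteq> {}" using that by auto
    then have "Max (r ` S) \<in> r ` S" by simp
    then obtain a where a: "a \<in> S" "r a = Max (r ` S)" by auto
    have "r x < r a" if "x \<in> S - {a}" for x
    proof -
      have "r x \<le> r a" using that a by simp
      moreover have "r x \<noteq> r a" using that assms by (auto simp: inj_eq)
      ultimately show ?thesis by simp
    qed
    then show ?thesis using a by (intro bexI[of _ a]) (auto simp: pa_cE)
  qed
  then show ?thesis using dag_cE[of UNIV r]
    by (auto simp: vec_eq_iff cvec_eta one_imset_def)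
qed

lemma markov_c_aux:
  fixes G H :: "('n::finite \<times> 'n) set"
  assumes G: "is_dag G" and H: "is_dag H" and m: "markov_equiv G H"
    and a: "a \<in> S" "S - {a} \<subseteq> pa G a"
  shows "\<exists>x\<in>S. S - {x} \<subseteq> pa H x"
proof -
  have adj: "adj G x y \<longleftrightarrow> adj H x y" for x y using m by (simp add: markov_equiv_def)
  have imm: "immoralities G = immoralities H" using m by (simp add: markov_equiv_def)
  define D where "D = {d \<in> S - {a}. (a, d) \<in> H}"
  show ?thesis
  proof (cases "D = {}")
    case True
    have "S - {a} \<subseteq> pa H a"
    proof
      fix d assume d: "d \<in> S - {a}"
      then have "(d, a) \<in> G" using a by (auto simp: pa_def)
      then have "adj H d a" using adj by (auto simp: adj_def)
      moreover have "(a, d) \<notin> H" using True d D_def by auto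
      ultimately show "d \<in> pa H a" by (auto simp: adj_def pa_def)
    qed
    then show ?thesis using a by auto
  next
    case False
    obtain d where d: "d \<in> D" "\<forall>y\<in>D. (d, y) \<notin> H" using dag_sink[OF H False] by auto
    have dS: "d \<in> S" "d \<noteq> a" "(a, d) \<in> H" using d D_def by auto
    have "S - {d} \<subseteq> pa H d"
    proof
      fix y assume y: "y \<in> S - {d}"
      show "y \<in> pa H d"
      proof (cases "y = a")
        case True then show ?thesis using dS by (simp add: pa_def)
      next
        case False
        have yG: "(y, a) \<in> G" "(d, a) \<in> G" using a y False dS by (auto simp: pa_def)
        have "adj G y d"
        proof (rule ccontr)
          assume na: "\<not> adj G y d"
          have "y \<noteq> d" using y by auto
          then have "(y, a, d) \<in> immoralities G" using yG na by (simp add: immoralities_def)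
          then have "(y, a, d) \<in> immoralities H" using imm by simp
          then have "(d, a) \<in> H" by (simp add: immoralities_def)
          then show False using dS(3) dag_no_2cycle[OF H] by blast
        qed
        then have "adj H y d" using adj by simp
        moreover have "(d, y) \<notin> H"
        proof
          assume dy: "(d, y) \<in> H"
          show False
          proof (cases "y \<in> D")
            case True then show False using d dy by auto
          next
            case False
            then have "(a, y) \<notin> H" using y \<open>y \<noteq> a\<close> D_def by auto
            moreover have "adj H y a" using yG adj by (auto simp: adj_def)
            ultimately have "(y, a) \<in> H" by (auto simp: adj_def)
            then show False using dy dS(3) dag_no_3cycle[OF H] by blast
          qed
        qed
        ultimately show ?thesis by (auto simp: adj_def pa_def)
      qed
    qed
    then show ?thesis using dS by auto
  qed
qed

lemma markov_cvec:
  assumes "is_dag G" "is_dag H" "markov_equiv G H"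
  shows "cvec (eta G) = cvec (eta H)"
proof -
  have sym: "markov_equiv H G" using assms(3) by (auto simp: markov_equiv_def)
  have "(\<exists>a\<in>S. S - {a} \<subseteq> pa G a) \<longleftrightarrow> (\<exists>a\<in>S. S - {a} \<subseteq> pa H a)" for S
    using markov_c_aux[OF assms(1,2,3)] markov_c_aux[OF assms(2,1) sym] by blast
  then show ?thesis by (simp add: vec_eq_iff cvec_eta assms)
qed



definition VU :: "(real ^ ('n::finite \<times> 'n set)) set" where
  "VU = {v. \<forall>p. \<not> in_Upsilon p \<longrightarrow> v $ p = 0}"

lemma subspace_VU: "subspace VU"
  by (auto simp: subspace_def VU_def)

lemma Ev_VU: "Ev a B \<in> VU"
  by (auto simp: Ev_def VU_def axis_def in_Upsilon_def)

lemma eta_VU: "eta E \<in> VU"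
  unfolding eta_sum using subspace_VU Ev_VU by (intro subspace_sum) auto

lemma P_N_VU: "P_N \<subseteq> VU"
  unfolding P_N_def using eta_VU subspace_VU
  by (intro hull_minimal) (auto intro: subspace_imp_convex)

definition W0 :: "(real ^ ('n::finite \<times> 'n set)) set" where
  "W0 = {eta (cE UNIV r1) - eta (cE UNIV r2) | r1 r2. inj r1 \<and> inj r2}"

definition hdT :: "'n set \<Rightarrow> 'n" where "hdT T = (SOME x. x \<in> T)"

definition CanF :: "'n::finite set \<Rightarrow> real ^ ('n \<times> 'n set)" where
  "CanF T = Ev (hdT T) (T - {hdT T})"

definition Can :: "(real ^ ('n::finite \<times> 'n set)) set" where
  "Can = CanF ` {T. 2 \<le> card T}"

lemma swap_eta:
  fixes a h :: "'n::finite"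
  assumes "a \<noteq> h" "a \<notin> B" "h \<notin> B"
  shows "\<exists>r1 r2. inj r1 \<and> inj r2 \<and>
     eta (cE UNIV r1) - eta (cE UNIV r2) = Ev a B + Ev h (insert a B) - Ev h B - Ev a (insert h B)"
proof -
  define M where "M = MM TYPE('n)"
  have lt: "to_nat x < M" for x :: 'n unfolding M_def by (rule to_nat_lt_MM)
  define r1 where "r1 x = (if x \<in> B then to_nat x else if x = a then M else if x = h then Suc M else Suc (Suc M) + to_nat x)" for x
  define r2 where "r2 x = (if x \<in> B then to_nat x else if x = h then M else if x = a then Suc M else Suc (Suc M) + to_nat x)" for x
  have ne: "to_nat x \<noteq> M" "to_nat x \<noteq> Suc M" "M \<noteq> to_nat x" "Suc M \<noteq> to_nat x"
      "to_nat x \<noteq> Suc (Suc (M + to_nat y))" "Suc (Suc (M + to_nat y)) \<noteq> to_nat x"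
      "M \<noteq> Suc (Suc (M + to_nat y))" "Suc M \<noteq> Suc (Suc (M + to_nat y))" for x y :: 'n
    using lt[of x] by auto
  have ti: "to_nat x = to_nat y \<longleftrightarrow> x = y" for x y :: 'n by (simp add: inj_eq[OF inj_to_nat])
  have i1: "inj r1"
  proof (rule injI)
    fix x y assume "r1 x = r1 y" then show "x = y"
      using lt[of x] lt[of y] ti unfolding r1_def by (auto split: if_splits)
  qed
  have i2: "inj r2"
  proof (rule injI)
    fix x y assume "r2 x = r2 y" then show "x = y"
      using lt[of x] lt[of y] ti unfolding r2_def by (auto split: if_splits)
  qed
  have pa1a: "pa (cE UNIV r1) a = B" using lt assms unfolding pa_cE r1_def by (auto simp: less_Suc_eq)
  have pa1h: "pa (cE UNIV r1) h = insert a B" using lt assms unfolding pa_cE r1_def by (auto simp: less_Suc_eq)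
  have pa2h: "pa (cE UNIV r2) h = B" using lt assms unfolding pa_cE r2_def by (auto simp: less_Suc_eq)
  have pa2a: "pa (cE UNIV r2) a = insert h B" using lt assms unfolding pa_cE r2_def by (auto simp: less_Suc_eq)
  have po: "pa (cE UNIV r1) x = pa (cE UNIV r2) x" if "x \<in> UNIV - {a, h}" for x
  proof -
    have "r1 y < r1 x \<longleftrightarrow> r2 y < r2 x" for y
      using that lt[of x] lt[of y] unfolding r1_def r2_def by auto
    then show ?thesis by (simp add: pa_cE)
  qed
  have "(\<Sum>x\<in>UNIV - {a, h}. Ev x (pa (cE UNIV r1) x)) = (\<Sum>x\<in>UNIV - {a, h}. Ev x (pa (cE UNIV r2) x))"
    using po by (intro sum.cong) auto
  moreover have "(\<Sum>x\<in>UNIV. f x) = f a + f h + (\<Sum>x\<in>UNIV - {a, h}. f x)" for f :: "'n \<Rightarrow> real ^ ('n \<times> 'n set)"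
  proof -
    have "(\<Sum>x\<in>UNIV. f x) = (\<Sum>x\<in>{a,h}. f x) + (\<Sum>x\<in>UNIV - {a, h}. f x)"
      by (metis add.commute finite sum.subset_diff top_greatest)
    then show ?thesis using assms by simp
  qed
  ultimately have "eta (cE UNIV r1) - eta (cE UNIV r2) = Ev a B + Ev h (insert a B) - Ev h B - Ev a (insert h B)"
    unfolding eta_sum using pa1a pa1h pa2a pa2h by (simp add: algebra_simps)
  then show ?thesis using i1 i2 by blast
qed

lemma reduction: "Ev a B \<in> span (W0 \<union> Can)"
proof (induction "card (insert a B)" arbitrary: a B rule: less_induct)
  case less
  show ?case
  proof (cases "B = {} \<or> a \<in> B")
    case True then show ?thesis by (auto simp: Ev_def span_zero)
  next
    case False
    then have aB: "a \<notin> B" "B \<noteq> {}" by auto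
    define T where "T = insert a B"
    have fT: "finite T" by simp
    obtain b where "b \<in> B" using aB by auto
    have "card {a, b} \<le> card T" using \<open>b \<in> B\<close> by (intro card_mono) (auto simp: T_def)
    moreover have "a \<noteq> b" using \<open>b \<in> B\<close> aB by auto
    then have "card {a, b} = 2" by simp
    ultimately have cT: "2 \<le> card T" by simp
    define h where "h = hdT T"
    have hT: "h \<in> T" unfolding h_def hdT_def T_def by (rule someI) auto
    show ?thesis
    proof (cases "h = a")
      case True
      have "T - {h} = B" using True aB T_def by auto
      then have "Ev a B = CanF T" using True by (simp add: CanF_def h_def)
      then have "Ev a B \<in> Can" using cT by (auto simp: Can_def)
      then show ?thesis by (auto intro: span_base)
    next
      case False
      then have hB: "h \<in> B" using hT T_def by auto
      have ah: "a \<noteq> h" using False by auto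
      define B' where "B' = B - {h}"
      have B': "h \<notin> B'" "a \<notin> B'" "insert h B' = B" "insert a B' = T - {h}"
        using hB aB False by (auto simp: B'_def T_def)
      obtain r1 r2 where r: "inj r1" "inj r2"
        "eta (cE UNIV r1) - eta (cE UNIV r2) = Ev a B' + Ev h (insert a B') - Ev h B' - Ev a (insert h B')"
        using swap_eta[OF ah B'(2,1)] by metis
      have w: "eta (cE UNIV r1) - eta (cE UNIV r2) \<in> span (W0 \<union> Can)"
      proof (rule span_base)
        show "eta (cE UNIV r1) - eta (cE UNIV r2) \<in> W0 \<union> Can" using r(1,2) unfolding W0_def by blast
      qed
      have c: "Ev h (insert a B') \<in> span (W0 \<union> Can)"
      proof -
        have "Ev h (insert a B') = CanF T" using B' by (simp add: CanF_def h_def)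
        then show ?thesis using cT by (intro span_base) (auto simp: Can_def)
      qed
      have i1: "Ev a B' \<in> span (W0 \<union> Can)"
      proof (rule less)
        have "insert a B' \<subset> insert a B" using B' hB ah by auto
        then show "card (insert a B') < card (insert a B)" by (simp add: psubset_card_mono)
      qed
      have i2: "Ev h B' \<in> span (W0 \<union> Can)"
      proof (rule less)
        have "insert h B' \<subset> insert a B" using B' aB by auto
        then show "card (insert h B') < card (insert a B)" by (simp add: psubset_card_mono)
      qed
      have "Ev a B = Ev a B' + Ev h (insert a B') - Ev h B' - (eta (cE UNIV r1) - eta (cE UNIV r2))"
        using r(3) B'(3) by simp
      then show ?thesis using w c i1 i2 by (simp add: span_add span_diff)
    qed
  qed
qed

lemma VU_span: "VU \<subseteq> span (W0 \<union> Can)"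
proof
  fix v :: "real ^ ('n::finite \<times> 'n set)" assume v: "v \<in> VU"
  have "v = (\<Sum>p\<in>UNIV. v $ p *\<^sub>R axis p 1)"
    using basis_expansion[of v] by (simp add: scalar_mult_eq_scaleR)
  also have "\<dots> = (\<Sum>p\<in>UNIV. v $ p *\<^sub>R Ev (fst p) (snd p))"
  proof (rule sum.cong[OF refl])
    fix p :: "'n \<times> 'n set"
    show "v $ p *\<^sub>R axis p 1 = v $ p *\<^sub>R Ev (fst p) (snd p)"
      using v by (cases p) (auto simp: VU_def Ev_def in_Upsilon_def)
  qed
  also have "\<dots> \<in> span (W0 \<union> Can)"
    by (intro span_sum span_scale reduction)
  finally show "v \<in> span (W0 \<union> Can)" .
qed

lemma cvec_W0: "w \<in> span W0 \<Longrightarrow> cvec w = 0"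
proof (rule linear_eq_0_on_span[OF linear_cvec])
  fix x assume "x \<in> W0"
  then obtain r1 r2 where "inj r1" "inj r2" "x = eta (cE UNIV r1) - eta (cE UNIV r2)" by (auto simp: W0_def)
  then show "cvec x = 0" by (simp add: linear_diff[OF linear_cvec] cvec_complete)
qed



lemma hdT_in: "T \<noteq> {} \<Longrightarrow> hdT T \<in> T"
  unfolding hdT_def by (rule someI_ex) auto

lemma card2_ne: "2 \<le> card T \<Longrightarrow> T - {x} \<noteq> {}"
proof
  assume "2 \<le> card T" "T - {x} = {}"
  then have "T \<subseteq> {x}" by auto
  then have "card T \<le> 1" using card_mono[of "{x}" T] by auto
  then show False using \<open>2 \<le> card T\<close> by auto
qed

lemma CanF_axis: "2 \<le> card T \<Longrightarrow> CanF T = axis (hdT T, T - {hdT T}) 1"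
  using card2_ne[of T "hdT T"] by (simp add: CanF_def Ev_def)

lemma inj_CanF: "inj_on CanF {T. 2 \<le> card T}"
proof (rule inj_onI)
  fix T1 T2 :: "'n::finite set" assume T: "T1 \<in> {T. 2 \<le> card T}" "T2 \<in> {T. 2 \<le> card T}" "CanF T1 = CanF T2"
  then have "axis (hdT T1, T1 - {hdT T1}) 1 = (axis (hdT T2, T2 - {hdT T2}) 1 :: real ^ ('n \<times> 'n set))"
    using CanF_axis[of T1] CanF_axis[of T2] by simp
  then have "(hdT T1, T1 - {hdT T1}) = (hdT T2, T2 - {hdT T2})"
    by (simp only: axis_eq_axis) auto
  moreover have "hdT T1 \<in> T1" "hdT T2 \<in> T2" using T(1,2) by (auto intro!: hdT_in)
  ultimately show "T1 = T2" by (metis insert_Diff prod.inject)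
qed

lemma cvec_CanF:
  assumes "2 \<le> card T"
  shows "cvec (CanF T) $ S = (if 2 \<le> card S \<and> hdT T \<in> S \<and> S \<subseteq> T then 1 else 0)"
proof -
  have h: "hdT T \<in> T" using assms by (auto intro!: hdT_in)
  have "(S - {hdT T} \<subseteq> T - {hdT T}) \<longleftrightarrow> S \<subseteq> T" if "hdT T \<in> S" using that h by auto
  then show ?thesis using card2_ne[OF assms, of "hdT T"] by (auto simp: CanF_def cvec_Ev)
qed

lemma span_Can_inj:
  fixes c :: "real ^ ('n::finite \<times> 'n set)"
  assumes c: "c \<in> span Can" and z: "cvec c = 0"
  shows "c = 0"
proof -
  let ?S2 = "{T::'n set. 2 \<le> card T}"
  have fin: "finite Can" by (simp add: Can_def)
  obtain u where cu: "c = (\<Sum>v\<in>Can. u v *\<^sub>R v)" using c span_finite[OF fin] by auto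
  define \<alpha> where "\<alpha> T = u (CanF T)" for T
  have c2: "c = (\<Sum>T\<in>?S2. \<alpha> T *\<^sub>R CanF T)"
    unfolding cu Can_def \<alpha>_def by (rule sum.reindex[OF inj_CanF, unfolded comp_def])
  have all0: "\<forall>T\<in>?S2. \<alpha> T = 0"
  proof (rule ccontr)
    assume "\<not> (\<forall>T\<in>?S2. \<alpha> T = 0)"
    then have Zne: "{T\<in>?S2. \<alpha> T \<noteq> 0} \<noteq> {}" by auto
    have Zf: "finite {T\<in>?S2. \<alpha> T \<noteq> 0}" by simp
    define m where "m = Max (card ` {T\<in>?S2. \<alpha> T \<noteq> 0})"
    have "m \<in> card ` {T\<in>?S2. \<alpha> T \<noteq> 0}" unfolding m_def using Zne Zf by (intro Max_in) auto
    then obtain S where S: "S \<in> ?S2" "\<alpha> S \<noteq> 0" "card S = m" by auto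
    have maxS: "card T \<le> card S" if "T \<in> ?S2" "\<alpha> T \<noteq> 0" for T
    proof -
      have "card T \<in> card ` {T\<in>?S2. \<alpha> T \<noteq> 0}" using that by auto
      then have "card T \<le> m" unfolding m_def using Zf by (intro Max_ge) auto
      then show ?thesis using S(3) by simp
    qed
    have "cvec c $ S = (\<Sum>T\<in>?S2. \<alpha> T * cvec (CanF T) $ S)"
      unfolding c2 by (simp add: linear_sum[OF linear_cvec] linear_scale[OF linear_cvec] sum_component)
    also have "\<dots> = (\<Sum>T\<in>?S2. if T = S then \<alpha> S else 0)"
    proof (rule sum.cong[OF refl])
      fix T assume T: "T \<in> ?S2"
      show "\<alpha> T * cvec (CanF T) $ S = (if T = S then \<alpha> S else 0)"
      proof (cases "T = S")
        case True
        have "S \<noteq> {}" using S(1) by auto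
        then show ?thesis using S(1) hdT_in[of S] True by (auto simp: cvec_CanF)
      next
        case False
        show ?thesis
        proof (cases "\<alpha> T = 0")
          case False
          have "\<not> (hdT T \<in> S \<and> S \<subseteq> T)"
          proof
            assume "hdT T \<in> S \<and> S \<subseteq> T"
            then have "S \<subset> T" using \<open>T \<noteq> S\<close> by auto
            then have "card S < card T" by (simp add: psubset_card_mono)
            then show False using maxS[OF T False] by simp
          qed
          then show ?thesis using T \<open>T \<noteq> S\<close> by (auto simp: cvec_CanF)
        qed (use \<open>T \<noteq> S\<close> in simp)
      qed
    qed
    also have "\<dots> = \<alpha> S" using S(1) by simp
    finally show False using z S(2) by simp
  qed
  then show ?thesis unfolding c2 by simp
qed

lemma dim_formula:
  fixes F :: "(real ^ ('n::finite \<times> 'n set)) set"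
  assumes FV: "F \<subseteq> VU" and e0: "e0 \<in> F" and W: "W0 \<subseteq> span ((\<lambda>x. x - e0) ` F)"
  shows "dim ((\<lambda>x. x - e0) ` F) = dim (cvec ` ((\<lambda>x. x - e0) ` F)) + dim (span (W0 :: (real ^ ('n \<times> 'n set)) set))"
proof -
  define D where "D = span ((\<lambda>x. x - e0) ` F)"
  define K where "K = span (W0 :: (real ^ ('n \<times> 'n set)) set)"
  define X where "X = D \<inter> span Can"
  have sD: "subspace D" "subspace K" "subspace X" unfolding D_def K_def X_def
    by (auto intro!: subspace_inter)
  have DV: "D \<subseteq> VU"
  proof -
    have "(\<lambda>x. x - e0) ` F \<subseteq> VU" using FV e0 subspace_VU by (auto intro: subspace_diff)
    then show ?thesis unfolding D_def using subspace_VU by (intro span_minimal) auto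
  qed
  have KD: "K \<subseteq> D" unfolding K_def D_def using W by (simp add: span_minimal)
  have sum: "D = {x + y |x y. x \<in> K \<and> y \<in> X}"
  proof
    show "D \<subseteq> {x + y |x y. x \<in> K \<and> y \<in> X}"
    proof
      fix v assume v: "v \<in> D"
      then have "v \<in> span (W0 \<union> Can)" using DV VU_span by auto
      then obtain k y where ky: "v = k + y" "k \<in> K" "y \<in> span Can" unfolding span_Un K_def by auto
      then have "y = v - k" by simp
      then have "y \<in> D" using v KD ky(2) sD(1) by (auto intro: subspace_diff)
      then show "v \<in> {x + y |x y. x \<in> K \<and> y \<in> X}" using ky X_def by auto
    qed
  next
    show "{x + y |x y. x \<in> K \<and> y \<in> X} \<subseteq> D"
      using KD sD(1) X_def by (auto intro: subspace_add)
  qed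
  have int0: "K \<inter> X = {0}"
  proof
    show "K \<inter> X \<subseteq> {0}"
    proof
      fix x assume "x \<in> K \<inter> X"
      then have "cvec x = 0" "x \<in> span Can" using cvec_W0 K_def X_def by auto
      then show "x \<in> {0}" using span_Can_inj by auto
    qed
  qed (use sD in \<open>auto intro: subspace_0\<close>)
  have d1: "dim D = dim K + dim X"
    using dim_sums_Int[OF sD(2) sD(3)] sum int0 by simp
  have img: "cvec ` D = cvec ` X"
  proof
    show "cvec ` D \<subseteq> cvec ` X"
    proof
      fix z assume "z \<in> cvec ` D"
      then obtain v where v: "v \<in> D" "z = cvec v" by auto
      then obtain k y where "v = k + y" "k \<in> K" "y \<in> X" using sum by auto
      then have "z = cvec y" using v cvec_W0 K_def by (simp add: linear_add[OF linear_cvec])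
      then show "z \<in> cvec ` X" using \<open>y \<in> X\<close> by auto
    qed
  qed (auto simp: X_def)
  have injX: "inj_on cvec (span X)"
  proof -
    have e: "span X = X" using sD(3) by simp
    have "inj_on cvec X"
    proof (rule inj_onI)
      fix x y assume xy: "x \<in> X" "y \<in> X" "cvec x = cvec y"
      then have "cvec (x - y) = 0" by (simp add: linear_diff[OF linear_cvec])
      moreover have "x - y \<in> span Can" using xy X_def by (auto intro: span_diff)
      ultimately show "x = y" using span_Can_inj by fastforce
    qed
    then show ?thesis unfolding e .
  qed
  have d2: "dim (cvec ` X) = dim X"
    by (rule dim_image_eq[OF linear_cvec injX])
  have "dim (cvec ` ((\<lambda>x. x - e0) ` F)) = dim (cvec ` D)"
    unfolding D_def by (metis dim_span linear_span_image[OF linear_cvec])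
  then show ?thesis using d1 d2 img by (simp add: D_def K_def)
qed

lemma aff_dim_formula:
  fixes F :: "(real ^ ('n::finite \<times> 'n set)) set"
  assumes FV: "F \<subseteq> VU" and e0: "e0 \<in> F" and W: "W0 \<subseteq> span ((\<lambda>x. x - e0) ` F)"
  shows "aff_dim F = aff_dim (cvec ` F) + int (dim (span (W0 :: (real ^ ('n \<times> 'n set)) set)))"
proof -
  have a1: "aff_dim F = int (dim ((\<lambda>x. x - e0) ` F))"
    using e0 by (intro aff_dim_eq_dim_subtract) (simp add: hull_inc)
  have a2: "aff_dim (cvec ` F) = int (dim ((\<lambda>x. x - cvec e0) ` (cvec ` F)))"
    using e0 by (intro aff_dim_eq_dim_subtract) (simp add: hull_inc)
  have "(\<lambda>x. x - cvec e0) ` (cvec ` F) = cvec ` ((\<lambda>x. x - e0) ` F)"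
    by (auto simp: image_image linear_diff[OF linear_cvec])
  then show ?thesis using a1 a2 dim_formula[OF assms] by simp
qed



lemma convex_P_N: "convex P_N" by (simp add: P_N_def)

lemma eta_P_N: "is_dag E \<Longrightarrow> eta E \<in> P_N"
  unfolding P_N_def by (rule hull_inc) auto

lemma finite_etas: "finite (eta ` {E :: ('n::finite \<times> 'n) set. is_dag E})" by simp

lemma exchange:
  assumes F: "F face_of P_N" and P: "x \<in> P_N" "y \<in> P_N" "x' \<in> P_N" "y' \<in> P_N"
    and eq: "x + y = x' + y'" and xy: "x \<in> F" "y \<in> F"
  shows "x' \<in> F"
proof -
  define m where "m = midpoint x y"
  have "(1/2) *\<^sub>R x + (1/2) *\<^sub>R y \<in> F"
    by (rule convexD[OF face_of_imp_convex[OF F] xy]) auto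
  then have mF: "m \<in> F" unfolding m_def midpoint_def by (simp add: scaleR_right_distrib)
  have mm: "m = midpoint x' y'" unfolding m_def midpoint_def using eq by simp
  show ?thesis
  proof (cases "x' = y'")
    case True
    then have "m = x'" using mm by (simp add: midpoint_def scaleR_2[symmetric] scaleR_add_left[symmetric] del: scaleR_add_left)
    then show ?thesis using mF by simp
  next
    case False
    then have "m \<in> open_segment x' y'" using mm by simp
    then show ?thesis using face_ofD[OF F _ P(3,4) mF] by blast
  qed
qed

lemma FP_face:
  assumes "\<forall>v\<in>P_N. ob \<bullet> v \<le> u"
  shows "{v \<in> P_N. ob \<bullet> v = u} face_of P_N"
proof -
  have "P_N \<inter> {v. ob \<bullet> v = u} face_of P_N"
    using assms convex_P_N by (intro face_of_Int_supporting_hyperplane_le) auto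
  moreover have "P_N \<inter> {v. ob \<bullet> v = u} = {v \<in> P_N. ob \<bullet> v = u}" by auto
  ultimately show ?thesis by simp
qed

lemma FC_face:
  assumes "se_objective ob" "\<forall>v\<in>P_N. ob \<bullet> v \<le> u"
  shows "{c \<in> C_N. tau ob \<bullet> c = u} face_of C_N"
proof -
  have "C_N \<inter> {c. tau ob \<bullet> c = u} face_of C_N"
    using valid_transfer[OF assms] by (intro face_of_Int_supporting_hyperplane_le) (auto simp: C_N_def)
  moreover have "C_N \<inter> {c. tau ob \<bullet> c = u} = {c \<in> C_N. tau ob \<bullet> c = u}" by auto
  ultimately show ?thesis by simp
qed

lemma all_complete:
  assumes se: "se_objective ob" and r0: "inj r0" and e: "ob \<bullet> eta (cE UNIV r0) = u" and r: "inj r"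
  shows "eta (cE UNIV r) \<in> {v \<in> P_N. ob \<bullet> v = u}"
proof -
  have "ob \<bullet> eta (cE UNIV r) = ob \<bullet> eta (cE UNIV r0)"
    using se dag_cE markov_cE[of r UNIV r0] r r0 unfolding se_objective_def by blast
  then show ?thesis using e eta_P_N[OF dag_cE] by simp
qed

lemma W0_span:
  fixes e0 :: "real ^ ('n::finite \<times> 'n set)"
  assumes "\<And>r. inj r \<Longrightarrow> eta (cE UNIV r) \<in> F" "e0 \<in> F"
  shows "W0 \<subseteq> span ((\<lambda>x. x - e0) ` F)"
proof
  fix w :: "real ^ ('n \<times> 'n set)" assume "w \<in> W0"
  then obtain r1 r2 where r: "inj r1" "inj r2" "w = eta (cE UNIV r1) - eta (cE UNIV r2)"
    by (auto simp: W0_def)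
  have "w = (eta (cE UNIV r1) - e0) - (eta (cE UNIV r2) - e0)" using r by simp
  moreover have "eta (cE UNIV r1) - e0 \<in> span ((\<lambda>x. x - e0) ` F)" "eta (cE UNIV r2) - e0 \<in> span ((\<lambda>x. x - e0) ` F)"
    using assms r by (auto intro: span_base)
  ultimately show "w \<in> span ((\<lambda>x. x - e0) ` F)" by (metis span_diff)
qed

definition kW :: "'n::finite itself \<Rightarrow> int" where
  "kW _ = int (dim (span (W0 :: (real ^ ('n \<times> 'n set)) set)))"

lemma aff_P_N: "aff_dim (P_N :: (real ^ ('n::finite \<times> 'n set)) set) = aff_dim (C_N :: (real ^ 'n set) set) + kW TYPE('n)"
proof -
  have c: "\<And>r. inj r \<Longrightarrow> eta (cE UNIV r) \<in> (P_N :: (real ^ ('n \<times> 'n set)) set)" by (simp add: eta_P_N dag_cE)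
  have "eta (cE UNIV (to_nat :: 'n \<Rightarrow> nat)) \<in> P_N" by (rule c) simp
  from aff_dim_formula[OF P_N_VU this W0_span[OF c this]] show ?thesis
    by (simp add: C_N_image kW_def)
qed

lemma aff_FP:
  fixes ob :: "real ^ ('n::finite \<times> 'n set)"
  assumes se: "se_objective ob" and r0: "inj r0" and e: "eta (cE UNIV r0) \<in> {v \<in> P_N. ob \<bullet> v = u}"
  shows "aff_dim {v \<in> P_N. ob \<bullet> v = u} = aff_dim {c \<in> C_N. tau ob \<bullet> c = u} + kW TYPE('n)"
proof -
  have e': "ob \<bullet> eta (cE UNIV r0) = u" using e by simp
  have c: "\<And>r. inj r \<Longrightarrow> eta (cE UNIV r) \<in> {v \<in> P_N. ob \<bullet> v = u}"
    by (rule all_complete[OF se r0 e'])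
  have V: "{v \<in> P_N. ob \<bullet> v = u} \<subseteq> VU" using P_N_VU by auto
  have fc: "{c \<in> C_N. tau ob \<bullet> c = u} = cvec ` {v \<in> P_N. ob \<bullet> v = u}" by (rule FC_image[OF se])
  show ?thesis unfolding fc kW_def by (rule aff_dim_formula[OF V e W0_span[OF c e]])
qed



lemma eta_comp: "eta E $ (a, B) = (if B \<noteq> {} \<and> a \<notin> B \<and> pa E a = B then 1 else 0)"
  by (auto simp: eta_def in_Upsilon_def)

lemma convex_coord_eq: "convex {v :: real ^ 'a. v $ p = c}"
  by (auto simp: convex_def algebra_simps) (metis distrib_right mult.commute mult_1)

lemma facet_sub_face:
  fixes S :: "'a::euclidean_space set"
  assumes "F facet_of S" "Z face_of S" "F \<subseteq> Z" "Z \<noteq> S" "convex S"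
  shows "F = Z"
proof (rule ccontr)
  assume ne: "F \<noteq> Z"
  have FZ: "F face_of Z" using assms facet_of_imp_face_of face_of_subset face_of_imp_subset by metis
  have "aff_dim F < aff_dim Z" using face_of_aff_dim_lt[OF face_of_imp_convex[OF assms(2)] FZ ne] .
  moreover have "aff_dim Z < aff_dim S" using face_of_aff_dim_lt[OF assms(5) assms(2) assms(4)] .
  moreover have "aff_dim F = aff_dim S - 1" using assms(1) by (simp add: facet_of_def)
  ultimately show False by simp
qed

lemma Q_lemma:
  fixes ob :: "real ^ ('n::finite \<times> 'n set)"
  assumes se: "se_objective ob" and valid: "\<forall>v\<in>P_N. ob \<bullet> v \<le> u"
    and facet: "{v \<in> P_N. ob \<bullet> v = u} facet_of P_N" and ups: "B \<noteq> {}" "a \<notin> B"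
  shows "\<exists>G. is_dag G \<and> eta G \<in> {v \<in> P_N. ob \<bullet> v = u} \<and> pa G a = B"
proof (rule ccontr)
  assume nG: "\<not> ?thesis"
  define FP where "FP = {v \<in> P_N. ob \<bullet> v = u}"
  define Z where "Z = {v \<in> P_N. v $ (a, B) = 0}"
  have FPf: "FP face_of P_N" unfolding FP_def using FP_face[OF valid] .
  obtain S' where S': "S' \<subseteq> eta ` {E. is_dag E}" "FP = convex hull S'"
    using face_of_convex_hull_subset[OF finite_imp_compact[OF finite_etas] FPf[unfolded P_N_def]]
    unfolding P_N_def by metis
  have "S' \<subseteq> {v. v $ (a, B) = 0}"
  proof
    fix s assume s: "s \<in> S'"
    then obtain G where G: "is_dag G" "s = eta G" using S' by auto
    have "s \<in> FP" using s S'(2) hull_inc by metis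
    then have "pa G a \<noteq> B" using nG G FP_def by auto
    then show "s \<in> {v. v $ (a, B) = 0}" using G by (simp add: eta_comp)
  qed
  then have "FP \<subseteq> {v. v $ (a, B) = 0}" unfolding S'(2) by (intro hull_minimal convex_coord_eq)
  then have FPZ: "FP \<subseteq> Z" unfolding Z_def FP_def by auto
  have nonneg: "\<forall>v\<in>P_N. 0 \<le> v $ (a, B)"
  proof -
    have "P_N \<subseteq> {v. 0 \<le> v $ (a, B)}"
      unfolding P_N_def
    proof (rule hull_minimal)
      show "eta ` {E. is_dag E} \<subseteq> {v. 0 \<le> v $ (a, B)}" by (auto simp: eta_comp)
      show "convex {v :: real ^ ('n \<times> 'n set). 0 \<le> v $ (a, B)}"
        by (auto simp: convex_def)
    qed
    then show ?thesis by auto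
  qed
  have Zf: "Z face_of P_N"
  proof -
    have "P_N \<inter> {v. (- axis (a, B) 1) \<bullet> v = 0} face_of P_N"
      using nonneg convex_P_N by (intro face_of_Int_supporting_hyperplane_le) (auto simp: inner_axis')
    moreover have "P_N \<inter> {v. (- axis (a, B) 1) \<bullet> v = 0} = Z" by (auto simp: Z_def inner_axis')
    ultimately show ?thesis by simp
  qed
  define M where "M = MM TYPE('n)"
  have lt: "to_nat x < M" for x :: 'n unfolding M_def by (rule to_nat_lt_MM)
  define R where "R = insert a B"
  define r1 where "r1 x = (if x = a then M else to_nat x)" for x
  define r2 where "r2 x = (if x = a then 0 else Suc (to_nat x))" for x
  have ti: "to_nat x = to_nat y \<longleftrightarrow> x = y" for x y :: 'n by (simp add: inj_eq[OF inj_to_nat])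
  have i1: "inj_on r1 R"
  proof (rule inj_onI)
    fix x y assume "r1 x = r1 y" then show "x = y"
      using lt[of x] lt[of y] ti unfolding r1_def by (auto split: if_splits)
  qed
  have i2: "inj_on r2 R"
  proof (rule inj_onI)
    fix x y assume "r2 x = r2 y" then show "x = y"
      using ti unfolding r2_def by (auto split: if_splits)
  qed
  have pa1: "pa (cE R r1) a = B" using lt ups unfolding pa_cE R_def r1_def by auto
  have pa2: "pa (cE R r2) a = {}" unfolding pa_cE R_def r2_def by auto
  have G1P: "eta (cE R r1) \<in> P_N" "eta (cE R r2) \<in> P_N" by (auto intro: eta_P_N dag_cE)
  have c1: "eta (cE R r1) $ (a, B) = 1" using pa1 ups by (simp add: eta_comp)
  have c2: "eta (cE R r2) $ (a, B) = 0" using pa2 ups by (simp add: eta_comp)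
  have "Z \<noteq> P_N"
  proof
    assume "Z = P_N"
    then have "eta (cE R r1) \<in> Z" using G1P by simp
    then show False using c1 by (simp add: Z_def)
  qed
  then have FZ: "FP = Z" using facet_sub_face[OF facet[folded FP_def] Zf FPZ _ convex_P_N] by simp
  have "eta (cE R r2) \<in> FP" using FZ G1P c2 Z_def by auto
  then have "ob \<bullet> eta (cE R r2) = u" by (simp add: FP_def)
  moreover have "ob \<bullet> eta (cE R r1) = ob \<bullet> eta (cE R r2)"
    using se dag_cE markov_cE[OF i1 i2] unfolding se_objective_def by blast
  ultimately have "eta (cE R r1) \<in> FP" using G1P by (simp add: FP_def)
  then show False using FZ c1 Z_def by auto
qed



lemma dag_rank:
  fixes G :: "('n::finite \<times> 'n) set"
  assumes "is_dag G"
  shows "\<exists>t :: 'n \<Rightarrow> nat. \<forall>y w. (y, w) \<in> G \<longrightarrow> t y < t w"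
proof -
  define t where "t w = card {z. (z, w) \<in> G\<^sup>+}" for w
  have "t y < t w" if "(y, w) \<in> G" for y w
  proof -
    have "{z. (z, y) \<in> G\<^sup>+} \<subseteq> {z. (z, w) \<in> G\<^sup>+}" using that by (auto intro: trancl_into_trancl)
    moreover have "y \<in> {z. (z, w) \<in> G\<^sup>+}" using that by auto
    moreover have "y \<notin> {z. (z, y) \<in> G\<^sup>+}" using assms by (auto simp: is_dag_def acyclic_def)
    ultimately have "{z. (z, y) \<in> G\<^sup>+} \<subset> {z. (z, w) \<in> G\<^sup>+}" by blast
    then show ?thesis unfolding t_def by (simp add: psubset_card_mono)
  qed
  then show ?thesis by blast
qed

definition Inv :: "(real ^ ('n::finite \<times> 'n set)) set \<Rightarrow> 'n set \<Rightarrow> ('n \<Rightarrow> nat) \<Rightarrow> ('n \<times> 'n) set \<Rightarrow> bool" where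
  "Inv FP Z r G \<longleftrightarrow> is_dag G \<and> eta G \<in> FP \<and> (\<forall>z\<in>Z. pa G z = - Z \<union> {y\<in>Z. r y < r z})
     \<and> (\<forall>x. x \<notin> Z \<longrightarrow> pa G x \<subseteq> - Z) \<and> inj_on r Z"

lemma eta_pa_cong: "(\<And>w. pa G w = pa H w) \<Longrightarrow> eta G = eta H"
  by (simp add: eta_sum)

lemma Inv_step:
  fixes ob :: "real ^ ('n::finite \<times> 'n set)"
  assumes se: "se_objective ob" and valid: "\<forall>v\<in>P_N. ob \<bullet> v \<le> u"
    and facet: "{v \<in> P_N. ob \<bullet> v = u} facet_of P_N"
    and inv: "Inv {v \<in> P_N. ob \<bullet> v = u} Z r G" and c2: "2 \<le> card (- Z)"
  shows "\<exists>Z' r' G'. Inv {v \<in> P_N. ob \<bullet> v = u} Z' r' G' \<and> card (- Z') < card (- Z)"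
proof -
  define FP where "FP = {v \<in> P_N. ob \<bullet> v = u}"
  have FPf: "FP face_of P_N" unfolding FP_def using FP_face[OF valid] .
  have G: "is_dag G" "eta G \<in> FP" "\<And>z. z \<in> Z \<Longrightarrow> pa G z = - Z \<union> {y\<in>Z. r y < r z}"
      "\<And>x. x \<notin> Z \<Longrightarrow> pa G x \<subseteq> - Z" "inj_on r Z"
    using inv by (auto simp: Inv_def FP_def)
  have Zne: "- Z \<noteq> {}" using c2 by auto
  obtain x where x: "x \<in> - Z" "\<forall>y\<in>- Z. (x, y) \<notin> G" using dag_sink[OF G(1) Zne] by blast
  define B where "B = - Z - {x}"
  have Bne: "B \<noteq> {}" unfolding B_def by (rule card2_ne[OF c2])
  have xB: "x \<notin> B" by (simp add: B_def)
  obtain H where H: "is_dag H" "eta H \<in> FP" "pa H x = B"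
    using Q_lemma[OF se valid facet Bne xB] unfolding FP_def by blast
  define G' where "G' = {(y, w). (y, w) \<in> G \<and> w \<noteq> x} \<union> {(y, w). w = x \<and> y \<in> B}"
  define H' where "H' = {(y, w). (y, w) \<in> H \<and> w \<noteq> x} \<union> {(y, w). w = x \<and> y \<in> pa G x}"
  have paG': "pa G' w = (if w = x then B else pa G w)" for w by (auto simp: pa_def G'_def)
  have paH': "pa H' w = (if w = x then pa G x else pa H w)" for w by (auto simp: pa_def H'_def)
  have xnp: "x \<notin> pa G x" using dag_no_loop[OF G(1)] by (simp add: pa_def)
  have paGx: "pa G x \<subseteq> B" using G(4)[of x] x xnp by (auto simp: B_def)
  have H'H: "H' \<subseteq> H" using paGx H(3) by (auto simp: H'_def pa_def)
  have dH': "is_dag H'" using H(1) H'H by (auto simp: is_dag_def intro: acyclic_subset)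
  obtain t :: "'n \<Rightarrow> nat" where t: "\<And>y w. (y, w) \<in> G \<Longrightarrow> t y < t w" using dag_rank[OF G(1)] by blast
  define MT where "MT = Suc (Max (range t))"
  have tlt: "t y < MT" for y unfolding MT_def by (simp add: le_imp_less_Suc)
  define t' where "t' w = (if w \<in> Z then MT + 1 + t w else if w = x then MT else t w)" for w
  have dG': "is_dag G'" unfolding is_dag_def
  proof (rule acyclic_rank[of _ t'])
    fix y w assume yw: "(y, w) \<in> G'"
    show "t' y < t' w"
    proof (cases "w = x")
      case True
      then have "y \<in> B" using yw by (auto simp: G'_def)
      then show ?thesis using True x tlt[of y] by (auto simp: t'_def B_def)
    next
      case False
      then have yG: "(y, w) \<in> G" using yw by (auto simp: G'_def)
      show ?thesis
      proof (cases "w \<in> Z")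
        case True
        then show ?thesis using t[OF yG] tlt[of y] by (auto simp: t'_def)
      next
        case wZ: False
        then have "y \<in> - Z" using G(4)[of w] yG by (auto simp: pa_def)
        moreover have "y \<noteq> x" using x(2) wZ yG by auto
        ultimately show ?thesis using t[OF yG] wZ False by (auto simp: t'_def)
      qed
    qed
  qed
  have eq: "eta G + eta H = eta G' + eta H'"
  proof -
    have "Ev w (pa G w) + Ev w (pa H w) = Ev w (pa G' w) + Ev w (pa H' w)" for w
      using H(3) by (cases "w = x") (auto simp: paG' paH')
    then show ?thesis unfolding eta_sum by (simp add: sum.distrib[symmetric])
  qed
  have G'FP: "eta G' \<in> FP"
    by (rule exchange[OF FPf _ _ _ _ eq G(2) H(2)])
       (auto intro: eta_P_N G(1) H(1) dG' dH')
  define Z' where "Z' = insert x Z"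
  define r' where "r' y = (if y = x then 0 else Suc (r y))" for y
  have "Inv FP Z' r' G'"
    unfolding Inv_def
  proof (intro conjI)
    show "is_dag G'" by (rule dG')
    show "eta G' \<in> FP" by (rule G'FP)
    show "\<forall>z\<in>Z'. pa G' z = - Z' \<union> {y \<in> Z'. r' y < r' z}"
    proof
      fix z assume z: "z \<in> Z'"
      show "pa G' z = - Z' \<union> {y \<in> Z'. r' y < r' z}"
      proof (cases "z = x")
        case True
        then show ?thesis by (auto simp: paG' B_def Z'_def r'_def)
      next
        case False
        then have zZ: "z \<in> Z" using z Z'_def by auto
        then show ?thesis using False G(3)[OF zZ] x(1)
          by (auto simp: paG' Z'_def r'_def)
      qed
    qed
    show "\<forall>w. w \<notin> Z' \<longrightarrow> pa G' w \<subseteq> - Z'"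
    proof (intro allI impI)
      fix w assume w: "w \<notin> Z'"
      then have "w \<noteq> x" "w \<in> - Z" by (auto simp: Z'_def)
      then have "x \<notin> pa G w" using x(2) by (auto simp: pa_def)
      then show "pa G' w \<subseteq> - Z'" using G(4)[of w] \<open>w \<noteq> x\<close> \<open>w \<in> - Z\<close> by (auto simp: paG' Z'_def)
    qed
    show "inj_on r' Z'"
      using G(5) x(1) by (auto simp: inj_on_def r'_def Z'_def)
  qed
  moreover have "card (- Z') < card (- Z)"
  proof -
    have "- Z' \<subset> - Z" using x(1) by (auto simp: Z'_def)
    then show ?thesis by (simp add: psubset_card_mono)
  qed
  ultimately show ?thesis unfolding FP_def by blast
qed

lemma Inv_iter:
  fixes ob :: "real ^ ('n::finite \<times> 'n set)"
  assumes se: "se_objective ob" and valid: "\<forall>v\<in>P_N. ob \<bullet> v \<le> u"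
    and facet: "{v \<in> P_N. ob \<bullet> v = u} facet_of P_N"
  shows "Inv {v \<in> P_N. ob \<bullet> v = u} Z r G \<Longrightarrow> \<exists>Z' r' G'. Inv {v \<in> P_N. ob \<bullet> v = u} Z' r' G' \<and> card (- Z') \<le> 1"
proof (induction "card (- Z)" arbitrary: Z r G rule: less_induct)
  case less
  show ?case
  proof (cases "2 \<le> card (- Z)")
    case True
    obtain Z' r' G' where "Inv {v \<in> P_N. ob \<bullet> v = u} Z' r' G'" "card (- Z') < card (- Z)"
      using Inv_step[OF se valid facet less.prems True] by blast
    then show ?thesis using less.hyps by blast
  next
    case False
    then show ?thesis using less.prems by (intro exI[of _ Z] exI[of _ r] exI[of _ G]) auto
  qed
qed

lemma complete_in_facet:
  fixes ob :: "real ^ ('n::finite \<times> 'n set)"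
  assumes se: "se_objective ob" and valid: "\<forall>v\<in>P_N. ob \<bullet> v \<le> u"
    and facet: "{v \<in> P_N. ob \<bullet> v = u} facet_of P_N"
  shows "\<exists>r. inj r \<and> eta (cE UNIV r) \<in> {v \<in> P_N. ob \<bullet> v = u}"
proof -
  define FP where "FP = {v \<in> P_N. ob \<bullet> v = u}"
  have FPf: "FP face_of P_N" unfolding FP_def using FP_face[OF valid] .
  obtain S' where S': "S' \<subseteq> eta ` {E. is_dag E}" "FP = convex hull S'"
    using face_of_convex_hull_subset[OF finite_imp_compact[OF finite_etas] FPf[unfolded P_N_def]]
    unfolding P_N_def by metis
  have "FP \<noteq> {}" using facet by (simp add: facet_of_def FP_def)
  then have "S' \<noteq> {}" using S'(2) by auto
  then obtain s where "s \<in> S'" by blast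
  then obtain G0 where G0: "is_dag G0" "eta G0 \<in> S'" using S'(1) by auto
  then have "eta G0 \<in> FP" using S'(2) hull_inc by metis
  then have "Inv FP {} (\<lambda>_. 0) G0" using G0 by (simp add: Inv_def)
  then obtain Z r G where inv: "Inv FP Z r G" and cz: "card (- Z) \<le> 1"
    using Inv_iter[OF se valid facet, of "{}" "\<lambda>_. 0" G0] unfolding FP_def by blast
  have G: "is_dag G" "eta G \<in> FP" "\<And>z. z \<in> Z \<Longrightarrow> pa G z = - Z \<union> {y\<in>Z. r y < r z}"
      "\<And>x. x \<notin> Z \<Longrightarrow> pa G x \<subseteq> - Z" "inj_on r Z"
    using inv by (auto simp: Inv_def)
  have one: "x = y" if "x \<notin> Z" "y \<notin> Z" for x y
  proof -
    have "card {x, y} \<le> card (- Z)" using that by (intro card_mono) auto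
    then show ?thesis using cz by (cases "x = y") auto
  qed
  define r'' where "r'' y = (if y \<in> Z then Suc (r y) else 0)" for y
  have inj: "inj r''"
  proof (rule injI)
    fix x y assume "r'' x = r'' y" then show "x = y"
      using G(5) one by (auto simp: r''_def inj_on_def split: if_splits)
  qed
  have "pa G w = pa (cE UNIV r'') w" for w
  proof (cases "w \<in> Z")
    case True
    then show ?thesis using G(3)[OF True] by (auto simp: pa_cE r''_def)
  next
    case False
    have "pa G w \<subseteq> - Z" using G(4)[OF False] .
    moreover have "w \<notin> pa G w" using dag_no_loop[OF G(1)] by (simp add: pa_def)
    ultimately have "pa G w = {}" using one False by blast
    then show ?thesis using False by (simp add: pa_cE r''_def)
  qed
  then have "eta G = eta (cE UNIV r'')" by (intro eta_pa_cong) auto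
  then show ?thesis using G(2) inj FP_def by auto
qed



lemma part1:
  fixes ob :: "real ^ ('n::finite \<times> 'n set)"
  assumes se: "se_objective ob" and valid: "\<forall>v\<in>P_N. ob \<bullet> v \<le> u"
  shows "{v \<in> P_N. ob \<bullet> v = u} facet_of P_N \<longleftrightarrow>
         ({c \<in> C_N. tau ob \<bullet> c = u} facet_of C_N \<and> one_imset \<in> {c \<in> C_N. tau ob \<bullet> c = u})"
proof -
  define FP where "FP = {v \<in> P_N. ob \<bullet> v = u}"
  define FC where "FC = {c \<in> C_N. tau ob \<bullet> c = u}"
  have FPf: "FP face_of P_N" unfolding FP_def using FP_face[OF valid] .
  have FCf: "FC face_of C_N" unfolding FC_def using FC_face[OF se valid] .
  have FCi: "FC = cvec ` FP" unfolding FC_def FP_def by (rule FC_image[OF se])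
  have aP: "aff_dim (P_N :: (real ^ ('n \<times> 'n set)) set) = aff_dim (C_N :: (real ^ 'n set) set) + kW TYPE('n)"
    by (rule aff_P_N)
  show ?thesis unfolding FP_def[symmetric] FC_def[symmetric]
  proof
    assume fac: "FP facet_of P_N"
    obtain r where r: "inj r" "eta (cE UNIV r) \<in> FP"
      using complete_in_facet[OF se valid fac[unfolded FP_def]] FP_def by blast
    have aF: "aff_dim FP = aff_dim FC + kW TYPE('n)"
      unfolding FP_def FC_def by (rule aff_FP[OF se r(1) r(2)[unfolded FP_def]])
    have one: "one_imset \<in> FC" using r FCi cvec_complete[OF r(1)] by (metis image_eqI)
    have "aff_dim FP = aff_dim (P_N :: (real ^ ('n \<times> 'n set)) set) - 1" using fac by (simp add: facet_of_def)
    then have "FC facet_of C_N" using FCf one aF aP by (auto simp: facet_of_def)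
    then show "FC facet_of C_N \<and> one_imset \<in> FC" using one by simp
  next
    assume asm: "FC facet_of C_N \<and> one_imset \<in> FC"
    define e0 where "e0 = eta (cE UNIV (to_nat :: 'n \<Rightarrow> nat))"
    have e0P: "e0 \<in> P_N" unfolding e0_def by (rule eta_P_N[OF dag_cE])
    have ce0: "cvec e0 = one_imset" unfolding e0_def by (rule cvec_complete) simp
    have "tau ob \<bullet> one_imset = u" using asm FC_def by simp
    then have "ob \<bullet> e0 = u" using tau_cvec[OF se, of e0] ce0 by simp
    then have e0F: "e0 \<in> FP" using e0P FP_def by simp
    have aF: "aff_dim FP = aff_dim FC + kW TYPE('n)"
      unfolding FP_def FC_def by (rule aff_FP[OF se _ e0F[unfolded FP_def e0_def]]) simp
    have "aff_dim FC = aff_dim (C_N :: (real ^ 'n set) set) - 1" using asm by (simp add: facet_of_def)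
    then show "FP facet_of P_N" using FPf e0F aF aP by (auto simp: facet_of_def)
  qed
qed

lemma empty_sets: "{S. 2 \<le> card S \<and> a \<in> S \<and> S - {a} \<subseteq> {}} = {}"
proof (safe)
  fix S assume "2 \<le> card S" "a \<in> S" "S - {a} \<subseteq> {}"
  then have "S \<subseteq> {a}" by auto
  then have "card S \<le> 1" using card_mono[of "{a}" S] by auto
  then show "S \<in> {}" using \<open>2 \<le> card S\<close> by auto
qed

lemma part2:
  fixes F :: "(real ^ ('n::finite set)) set"
  assumes fac: "F facet_of C_N"
  shows "\<exists>(ob :: real ^ ('n \<times> 'n set)) u. se_objective ob \<and> (\<forall>v\<in>P_N. ob \<bullet> v \<le> u) \<and>
               F = {c \<in> C_N. tau ob \<bullet> c = u}"
proof -
  have "polytope (C_N :: (real ^ ('n::finite set)) set)"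
    unfolding polytope_def C_N_def
    by (rule exI[of _ "(\<lambda>E. cvec (eta E)) ` {E :: ('n \<times> 'n) set. is_dag E}"]) simp
  then have "polyhedron (C_N :: (real ^ ('n::finite set)) set)" by (rule polytope_imp_polyhedron)
  then obtain t b where tb: "C_N \<subseteq> {x. t \<bullet> x \<le> b}" "F = C_N \<inter> {x. t \<bullet> x = b}"
    using facet_of_polyhedron[OF _ fac] by metis
  define ob :: "real ^ ('n \<times> 'n set)" where "ob = (\<chi> p. t \<bullet> cvec (axis p 1))"
  have tr: "ob \<bullet> v = t \<bullet> cvec v" for v by (rule transfer_inner) (simp add: ob_def)
  have zo: "\<forall>p. \<not> in_Upsilon p \<longrightarrow> ob $ p = 0"
  proof (intro allI impI)
    fix p :: "'n \<times> 'n set" assume "\<not> in_Upsilon p"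
    then obtain a B where p: "p = (a, B)" "B = {} \<or> a \<in> B" by (cases p) (auto simp: in_Upsilon_def)
    show "ob $ p = 0"
    proof (cases "a \<in> B")
      case True then show ?thesis using p by (simp add: ob_def inner_cvec_axis)
    next
      case False
      then have B: "B = {}" using p by auto
      show ?thesis using False unfolding ob_def p(1) vec_lambda_beta inner_cvec_axis B empty_sets by simp
    qed
  qed
  have se: "se_objective ob"
    unfolding se_objective_def
  proof (intro conjI allI impI)
    fix p :: "'n \<times> 'n set" assume "\<not> in_Upsilon p" then show "ob $ p = 0" using zo by blast
  next
    fix G H :: "('n \<times> 'n) set" assume "is_dag G \<and> is_dag H \<and> markov_equiv G H"
    then have "cvec (eta G) = cvec (eta H)" using markov_cvec by blast
    then show "ob \<bullet> eta G = ob \<bullet> eta H" by (simp add: tr)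
  qed
  have valid: "\<forall>v\<in>P_N. ob \<bullet> v \<le> b"
  proof
    fix v :: "real ^ ('n \<times> 'n set)" assume "v \<in> P_N"
    then have "cvec v \<in> C_N" unfolding C_N_image by blast
    then show "ob \<bullet> v \<le> b" using tb(1) tr[of v] by auto
  qed
  have "F = {c \<in> C_N. tau ob \<bullet> c = b}"
  proof -
    have "tau ob \<bullet> c = t \<bullet> c" if "c \<in> C_N" for c
    proof -
      from that have "c \<in> cvec ` P_N" by (simp only: C_N_image)
      then obtain v where "v \<in> P_N" "c = cvec v" by blast
      then show ?thesis using tau_cvec[OF se] tr by simp
    qed
    then show ?thesis using tb(2) by auto
  qed
  then show ?thesis using se valid by blast
qed

lemma eta_empty: "eta {} = 0"
  by (simp add: eta_sum pa_def Ev_def)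

lemma part3:
  fixes F :: "(real ^ ('n::finite set)) set"
  assumes fac: "F facet_of C_N" and one: "one_imset \<in> F"
  shows "0 \<notin> F"
proof
  assume z: "0 \<in> F"
  obtain ob :: "real ^ ('n \<times> 'n set)" and u where ou: "se_objective ob" "\<forall>v\<in>P_N. ob \<bullet> v \<le> u"
      "F = {c \<in> C_N. tau ob \<bullet> c = u}"
    using part2[OF fac] by blast
  define FP where "FP = {v \<in> P_N. ob \<bullet> v = u}"
  have facP: "FP facet_of P_N" unfolding FP_def using part1[OF ou(1,2)] fac one ou(3) by simp
  have FPf: "FP face_of P_N" unfolding FP_def using FP_face[OF ou(2)] .
  have u0: "u = 0" using z ou(3) by simp
  have d0: "is_dag ({} :: ('n \<times> 'n) set)" by (simp add: is_dag_def acyclic_def)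
  have e0: "eta ({} :: ('n \<times> 'n) set) = 0" by (rule eta_empty)
  have zP: "(0 :: real ^ ('n \<times> 'n set)) \<in> P_N" using eta_P_N[OF d0] unfolding e0 .
  have zFP: "(0 :: real ^ ('n \<times> 'n set)) \<in> FP" using zP u0 FP_def by simp
  have obz: "ob $ (a, B) = 0" if hB: "B \<noteq> {}" "a \<notin> B" for a B
  proof -
    obtain G where G: "is_dag G" "eta G \<in> FP" "pa G a = B"
      using Q_lemma[OF ou(1,2) facP[unfolded FP_def] hB] unfolding FP_def by blast
    define G'' where "G'' = {(y, w). (y, w) \<in> G \<and> w \<noteq> a}"
    have paG'': "pa G'' w = (if w = a then {} else pa G w)" for w by (auto simp: pa_def G''_def)
    have dG'': "is_dag G''" using G(1) by (auto simp: is_dag_def G''_def intro: acyclic_subset)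
    define st where "st = cE (insert a B) (\<lambda>x. if x = a then 1 else 0)"
    have past: "pa st w = (if w = a then B else {})" for w
      using hB by (auto simp: st_def pa_cE)
    have eq: "eta G + 0 = eta st + eta G''"
    proof -
      have "Ev w (pa G w) = Ev w (pa st w) + Ev w (pa G'' w)" for w
        using G(3) by (cases "w = a") (auto simp: past paG'' Ev_def)
      then show ?thesis unfolding eta_sum by (simp add: sum.distrib[symmetric])
    qed
    have "eta st \<in> FP"
      by (rule exchange[OF FPf _ _ _ _ eq G(2) zFP]) (auto intro: eta_P_N G(1) dG'' zP simp: st_def dag_cE)
    moreover have "eta st = Ev a B"
    proof -
      have "eta st = (\<Sum>w\<in>UNIV. if w = a then Ev a B else 0)"
        unfolding eta_sum by (rule sum.cong) (auto simp: past Ev_def)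
      then show ?thesis by simp
    qed
    ultimately have "ob \<bullet> Ev a B = 0" using u0 FP_def by simp
    then show ?thesis using inner_Ev[OF se_zo[OF ou(1)]] by simp
  qed
  have "ob = 0"
  unfolding vec_eq_iff
  proof (rule allI)
    fix p :: "'n \<times> 'n set"
    obtain a B where p: "p = (a, B)" by (cases p)
    show "ob $ p = 0 $ p"
    proof (cases "in_Upsilon p")
      case True then show ?thesis using obz p by (simp add: in_Upsilon_def)
    next
      case False then show ?thesis using se_zo[OF ou(1)] p by (simp add: zo_def)
    qed
  qed
  then have "FP = P_N" using u0 FP_def by simp
  then show False using facP by simp
qed

theorem corollary6:
  assumes "CARD('n::finite) \<ge> 2"
  shows "(\<forall>(ob :: real ^ ('n \<times> 'n set)) (u :: real).
            se_objective ob \<and> (\<forall>v\<in>P_N. ob \<bullet> v \<le> u) \<longrightarrow>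
            ({v \<in> P_N. ob \<bullet> v = u} facet_of P_N \<longleftrightarrow>
             ({c \<in> C_N. tau ob \<bullet> c = u} facet_of C_N \<and>
              one_imset \<in> {c \<in> C_N. tau ob \<bullet> c = u})))
       \<and> (\<forall>F. F facet_of (C_N :: (real ^ ('n set)) set) \<and> one_imset \<in> F \<longrightarrow>
            (\<exists>(ob :: real ^ ('n \<times> 'n set)) (u :: real).
               se_objective ob \<and> (\<forall>v\<in>P_N. ob \<bullet> v \<le> u) \<and>
               F = {c \<in> C_N. tau ob \<bullet> c = u}))
       \<and> (\<forall>F. F facet_of (C_N :: (real ^ ('n set)) set) \<and> one_imset \<in> F \<longrightarrow> 0 \<notin> F)"
  using part1 part2 part3 by blast


end
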